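(* Every CSNC ring is an NCSUC ring; that is, if every clean element of $R$ is strongly nil-clean, then every nil-clean element of $R$ is uniquely strongly clean.
   Context: All rings are associative with identity $1$. For a ring $R$, $\mathrm{Id}(R)$, $U(R)$, $\mathrm{Nil}(R)$ denote the sets of idempotents, units and nilpotent elements. An element $a\in R$ is clean if $a=e+u$ for some $e\in\mathrm{Id}(R)$, $u\in U(R)$; it is uniquely strongly clean if there is exactly one $e\in\mathrm{Id}(R)$ such that $a-e\in U(R)$ and $ae=ea$. An element $a$ is nil-clean if $a=e+q$ with $e\in \mathrm{Id}(R)$, $q\in\mathrm{Nil}(R)$, and strongly nil-clean if moreover $eq=qe$. A ring is CSNC if every clean element is strongly nil-clean, and NCSUC if every nil-clean element is uniquely strongly clean. *)

theory Defs
  imports Main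
begin

definition idem :: "'a::ring_1 \<Rightarrow> bool" where
  "idem e \<longleftrightarrow> e * e = e"

definition unit_el :: "'a::ring_1 \<Rightarrow> bool" where
  "unit_el u \<longleftrightarrow> (\<exists>v. u * v = 1 \<and> v * u = 1)"

definition nilp :: "'a::ring_1 \<Rightarrow> bool" where
  "nilp q \<longleftrightarrow> (\<exists>n. q ^ n = 0)"

definition clean :: "'a::ring_1 \<Rightarrow> bool" where
  "clean a \<longleftrightarrow> (\<exists>e u. idem e \<and> unit_el u \<and> a = e + u)"

definition uniquely_strongly_clean :: "'a::ring_1 \<Rightarrow> bool" where
  "uniquely_strongly_clean a \<longleftrightarrow> (\<exists>!e. idem e \<and> unit_el (a - e) \<and> a * e = e * a)"

definition nil_clean :: "'a::ring_1 \<Rightarrow> bool" where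
  "nil_clean a \<longleftrightarrow> (\<exists>e q. idem e \<and> nilp q \<and> a = e + q)"

definition strongly_nil_clean :: "'a::ring_1 \<Rightarrow> bool" where
  "strongly_nil_clean a \<longleftrightarrow> (\<exists>e q. idem e \<and> nilp q \<and> a = e + q \<and> e * q = q * e)"

definition CSNC :: "'a::ring_1 itself \<Rightarrow> bool" where
  "CSNC _ \<longleftrightarrow> (\<forall>a::'a. clean a \<longrightarrow> strongly_nil_clean a)"

definition NCSUC :: "'a::ring_1 itself \<Rightarrow> bool" where
  "NCSUC _ \<longleftrightarrow> (\<forall>a::'a. nil_clean a \<longrightarrow> uniquely_strongly_clean a)"

end

theory Submission
  imports Defs
begin

lemma pow_mult_comm:
  fixes x y :: "'a::ring_1"
  assumes "x * y = y * x"
  shows "(x * y) ^ n = x ^ n * y ^ n"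
proof (induct n)
  case 0 then show ?case by simp
next
  case (Suc n)
  have "(x * y) ^ Suc n = x * y * (x ^ n * y ^ n)" by (simp add: Suc)
  also have "\<dots> = x * (y * x ^ n) * y ^ n" by (simp add: mult.assoc)
  also have "\<dots> = x * (x ^ n * y) * y ^ n"
    using power_commuting_commutes[OF assms, of n] by simp
  also have "\<dots> = x ^ Suc n * y ^ Suc n" by (simp add: mult.assoc)
  finally show ?case .
qed

lemma nilp_mult_comm:
  fixes x y :: "'a::ring_1"
  assumes "x * y = y * x" "nilp x"
  shows "nilp (x * y)" "nilp (y * x)"
proof -
  obtain n where n: "x ^ n = 0" using assms(2) unfolding nilp_def by blast
  have "(x * y) ^ n = 0" using pow_mult_comm[OF assms(1)] n by simp
  then show "nilp (x * y)" "nilp (y * x)" unfolding nilp_def using assms(1) by auto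
qed

lemma nilp_neg:
  fixes x :: "'a::ring_1"
  assumes "nilp x" shows "nilp (- x)"
  proof -
  obtain n where "x ^ n = 0" using assms unfolding nilp_def by blast
  then have "(- x) ^ n = 0" by (simp add: power_minus[of x n])
  then show ?thesis unfolding nilp_def by blast
qed

lemma nilp_add_aux:
  fixes x y :: "'a::ring_1"
  assumes c: "x * y = y * x"
  shows "\<exists>P Q. (x + y) ^ (i + j) = x ^ i * P + y ^ j * Q"
proof (induct "i + j" arbitrary: i j rule: less_induct)
  case less
  show ?case
  proof (cases i)
    case 0 then show ?thesis by (rule_tac x="(x+y)^j" in exI, rule_tac x=0 in exI) simp
  next
    case (Suc i')
    show ?thesis
    proof (cases j)
      case 0 then show ?thesis by (rule_tac x=0 in exI, rule_tac x="(x+y)^i" in exI) simp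
    next
      case (Suc j')
      obtain P Q where 1: "(x + y) ^ (i' + j) = x ^ i' * P + y ^ j * Q"
        using less[of i' j] \<open>i = Suc i'\<close> by auto
      obtain P' Q' where 2: "(x + y) ^ (i + j') = x ^ i * P' + y ^ j' * Q'"
        using less[of i j'] \<open>j = Suc j'\<close> by auto
      have yx: "x * y ^ k = y ^ k * x" for k
        using power_commuting_commutes[of y x k] c by simp
      have "(x + y) ^ (i + j) = x * (x + y) ^ (i' + j) + y * (x + y) ^ (i + j')"
        using \<open>i = Suc i'\<close> \<open>j = Suc j'\<close> by (simp add: distrib_right)
      also have "\<dots> = x * (x ^ i' * P + y ^ j * Q) + y * (x ^ i * P' + y ^ j' * Q')"
        using 1 2 by simp
      also have "\<dots> = x ^ i * (P + y * P') + y ^ j * (x * Q + Q')"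
      proof -
        have a: "x * (x ^ i' * P) = x ^ i * P" using \<open>i = Suc i'\<close> by (simp add: mult.assoc)
        have b: "x * (y ^ j * Q) = y ^ j * (x * Q)" by (simp add: mult.assoc[symmetric] yx)
        have c2: "y * (x ^ i * P') = x ^ i * (y * P')"
          by (simp add: mult.assoc[symmetric] power_commuting_commutes[OF c])
        have d: "y * (y ^ j' * Q') = y ^ j * Q'" using \<open>j = Suc j'\<close> by (simp add: mult.assoc)
        show ?thesis unfolding distrib_left a b c2 d by (simp add: algebra_simps)
      qed
      finally show ?thesis by blast
    qed
  qed
qed

lemma nilp_add:
  fixes x y :: "'a::ring_1"
  assumes "x * y = y * x" "nilp x" "nilp y"
  shows "nilp (x + y)"
proof -
  obtain m n where "x ^ m = 0" "y ^ n = 0" using assms unfolding nilp_def by blast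
  then show ?thesis using nilp_add_aux[OF assms(1), of m n] unfolding nilp_def by auto
qed

lemma geom_aux:
  fixes q :: "'a::ring_1"
  shows "(1 - q) * (\<Sum>i<n. q ^ i) = 1 - q ^ n" "(\<Sum>i<n. q ^ i) * (1 - q) = 1 - q ^ n"
proof (induct n)
  case 0 show "(1 - q) * (\<Sum>i<0. q ^ i) = 1 - q ^ 0" "(\<Sum>i<0. q ^ i) * (1 - q) = 1 - q ^ 0" by simp_all
next
  case (Suc n)
  show "(1 - q) * (\<Sum>i<Suc n. q ^ i) = 1 - q ^ Suc n"
  proof -
    have "(1 - q) * (\<Sum>i<Suc n. q ^ i) = (1 - q) * (\<Sum>i<n. q ^ i) + (1 - q) * q ^ n"
      by (simp add: distrib_left)
    also have "\<dots> = 1 - q ^ Suc n" using Suc(1) by (simp add: algebra_simps)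
    finally show ?thesis .
  qed
  show "(\<Sum>i<Suc n. q ^ i) * (1 - q) = 1 - q ^ Suc n"
  proof -
    have "(\<Sum>i<Suc n. q ^ i) * (1 - q) = (\<Sum>i<n. q ^ i) * (1 - q) + q ^ n * (1 - q)"
      by (simp add: distrib_right)
    also have "\<dots> = 1 - q ^ Suc n" using Suc(2) by (simp add: algebra_simps power_commutes)
    finally show ?thesis .
  qed
qed

lemma nilp_unit:
  fixes q :: "'a::ring_1"
  assumes "nilp q" shows "unit_el (1 - q)"
proof -
  obtain n where "q ^ n = 0" using assms unfolding nilp_def by blast
  then show ?thesis using geom_aux[of q n] unfolding unit_el_def by auto
qed

lemma unit_neg:
  fixes u :: "'a::ring_1"
  assumes "unit_el u" shows "unit_el (- u)"
  using assms unfolding unit_el_def by (metis minus_mult_minus)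

lemma nilp_unit':
  fixes q :: "'a::ring_1"
  assumes "nilp q" shows "unit_el (1 + q)" "unit_el (q - 1)"
proof -
  show "unit_el (1 + q)" using nilp_unit[OF nilp_neg[OF assms]] by simp
  show "unit_el (q - 1)" using unit_neg[OF nilp_unit[OF assms]] by simp
qed

lemma unit_mult:
  fixes u v :: "'a::ring_1"
  assumes "unit_el u" "unit_el v" shows "unit_el (u * v)"
proof -
  obtain u' v' where "u * u' = 1" "u' * u = 1" "v * v' = 1" "v' * v = 1"
    using assms unfolding unit_el_def by blast
  then have "(u * v) * (v' * u') = 1" "(v' * u') * (u * v) = 1"
    by (simp_all add: mult.assoc) (simp_all add: mult.assoc[symmetric])
  then show ?thesis unfolding unit_el_def by blast
qed

lemma unit_pow:
  fixes u :: "'a::ring_1"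
  assumes "unit_el u" shows "unit_el (u ^ n)"
  by (induct n) (auto simp: unit_el_def[of 1] intro: unit_mult assms)

lemma unit_cancel:
  fixes u y :: "'a::ring_1"
  assumes "unit_el u" "y * u = 0" shows "y = 0"
proof -
  obtain v where "u * v = 1" using assms unfolding unit_el_def by blast
  then have "y = y * u * v" by (simp add: mult.assoc)
  then show ?thesis using assms by simp
qed

lemma peirce_comm:
  fixes a e x :: "'a::ring_1"
  assumes ie: "idem e" and ae: "a * e = e * a" and nq: "nilp (a - e)" and xa: "x * a = a * x"
  shows "x * e = e * x"
proof -
  define q where "q = a - e"
  have ee: "e * e = e" using ie unfolding idem_def .
  obtain n where n: "q ^ n = 0" using nq unfolding nilp_def q_def by blast
  have qn: "nilp q" using nq q_def by simp
  define y where "y = (1 - e) * x * e"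
  define y' where "y' = e * x * (1 - e)"
  have ay: "a * y = y * a"
  proof -
    have c1: "a * (1 - e) = (1 - e) * a" using ae by (simp add: algebra_simps)
    have c2: "a * e = e * a" using ae by (simp add: algebra_simps)
    have "a * y = (a * (1 - e)) * x * e" unfolding y_def by (simp add: mult.assoc)
    also have "\<dots> = (1 - e) * (a * x) * e" unfolding c1 by (simp add: mult.assoc)
    also have "\<dots> = (1 - e) * x * (a * e)" unfolding xa[symmetric] by (simp add: mult.assoc)
    also have "\<dots> = y * a" unfolding c2 y_def by (simp add: mult.assoc)
    finally show ?thesis .
  qed
  have e1: "e * (1 - e) = 0" "(1 - e) * e = 0" by (simp_all add: right_diff_distrib left_diff_distrib ee)
  have ey: "e * y = 0" unfolding y_def by (simp add: mult.assoc[symmetric] e1)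
  have ye: "y * e = y" unfolding y_def by (simp add: mult.assoc ee)
  have qy: "q * y = y * (1 + q)"
    using ay ey ye unfolding q_def by (simp add: algebra_simps)
  have "q ^ k * y = y * (1 + q) ^ k" for k
  proof (induct k)
    case (Suc k)
    have "q ^ Suc k * y = q ^ k * (q * y)" by (simp only: power_Suc2 mult.assoc)
    also have "\<dots> = q ^ k * y * (1 + q)" by (simp add: qy mult.assoc)
    also have "\<dots> = y * (1 + q) ^ Suc k" by (simp only: Suc mult.assoc power_Suc2)
    finally show ?case .
  qed simp
  from this[of n] n have "y * (1 + q) ^ n = 0" by simp
  then have y0: "y = 0" using unit_cancel[OF unit_pow[OF nilp_unit'(1)[OF qn]]] by blast
  have ay': "a * y' = y' * a"
  proof -
    have c1: "a * e = e * a" using ae by (simp add: algebra_simps)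
    have c2: "a * (1 - e) = (1 - e) * a" using ae by (simp add: algebra_simps)
    have "a * y' = (a * e) * x * (1 - e)" unfolding y'_def by (simp add: mult.assoc)
    also have "\<dots> = e * (a * x) * (1 - e)" unfolding c1 by (simp add: mult.assoc)
    also have "\<dots> = e * x * (a * (1 - e))" unfolding xa[symmetric] by (simp add: mult.assoc)
    also have "\<dots> = y' * a" unfolding c2 y'_def by (simp add: mult.assoc)
    finally show ?thesis .
  qed
  have ey': "e * y' = y'" unfolding y'_def by (simp add: mult.assoc[symmetric] ee)
  have ye': "y' * e = 0" unfolding y'_def by (simp add: mult.assoc e1)
  have qy': "q * y' = y' * (q - 1)"
    using ay' ey' ye' unfolding q_def by (simp add: algebra_simps)
  have "q ^ k * y' = y' * (q - 1) ^ k" for k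
  proof (induct k)
    case (Suc k)
    have "q ^ Suc k * y' = q ^ k * (q * y')" by (simp only: power_Suc2 mult.assoc)
    also have "\<dots> = q ^ k * y' * (q - 1)" by (simp add: qy' mult.assoc)
    also have "\<dots> = y' * (q - 1) ^ Suc k" by (simp only: Suc mult.assoc power_Suc2)
    finally show ?case .
  qed simp
  from this[of n] n have "y' * (q - 1) ^ n = 0" by simp
  then have y'0: "y' = 0" using unit_cancel[OF unit_pow[OF nilp_unit'(2)[OF qn]]] by blast
  have "x * e = e * x * e + y" unfolding y_def by (simp add: algebra_simps)
  moreover have "e * x = e * x * e + y'" unfolding y'_def by (simp add: algebra_simps mult.assoc)
  ultimately show ?thesis using y0 y'0 by simp
qed

lemma idem_pow:
  fixes f :: "'a::ring_1"
  assumes "f * f = f" shows "f * f ^ n = f"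
  by (induct n) (simp_all add: mult.assoc[symmetric] assms)

lemma uniq_half:
  fixes a h1 h2 :: "'a::ring_1"
  assumes i1: "h1 * h1 = h1" and i2: "h2 * h2 = h2" and a1: "a * h1 = h1 * a" and a2: "a * h2 = h2 * a"
    and n1: "nilp (a - h1)" and n2: "nilp (a - h2)" and c: "h2 * h1 = h1 * h2"
  shows "h1 * (1 - h2) = 0"
proof -
  define f where "f = h1 * (1 - h2)"
  have i1': "h1 * (h1 * z) = h1 * z" for z using i1 by (simp add: mult.assoc[symmetric])
  have i2': "h2 * (h2 * z) = h2 * z" for z using i2 by (simp add: mult.assoc[symmetric])
  have c': "h2 * (h1 * z) = h1 * (h2 * z)" for z using c by (simp add: mult.assoc[symmetric])
  have a1': "a * (h1 * z) = h1 * (a * z)" for z using a1 by (simp add: mult.assoc[symmetric])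
  have a2': "a * (h2 * z) = h2 * (a * z)" for z using a2 by (simp add: mult.assoc[symmetric])
  note R = right_diff_distrib left_diff_distrib distrib_left distrib_right mult.assoc
     i1 i2 c a1 a2 i1' i2' c' a1' a2'
  have ff: "f * f = f" unfolding f_def by (simp add: R)
  have fh2: "f * h2 = 0" unfolding f_def by (simp add: R)
  have h2f: "h2 * f = 0" unfolding f_def by (simp add: R)
  have fh1: "f * h1 = f" unfolding f_def by (simp add: R)
  have fa: "f * a = a * f" unfolding f_def by (simp add: R)
  have h1f: "h1 * f = f" unfolding f_def by (simp add: R)
  have "nilp ((a - h2) * f)" using nilp_mult_comm(1)[of "a - h2" f] n2 fa fh2 h2f
    by (simp add: algebra_simps)
  then obtain n where "((a - h2) * f) ^ n = 0" unfolding nilp_def by blast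
  moreover have "(a - h2) * f = f * (1 + (a - h1))" using fa h2f fh1 by (simp add: algebra_simps)
  moreover have "f * (1 + (a - h1)) = (1 + (a - h1)) * f" using fa fh1 h1f by (simp add: algebra_simps)
  ultimately have "f ^ n * (1 + (a - h1)) ^ n = 0" using pow_mult_comm by metis
  then have "f * f ^ n * (1 + (a - h1)) ^ n = 0" by (simp add: mult.assoc)
  then have "f * (1 + (a - h1)) ^ n = 0" using idem_pow[OF ff] by simp
  then have "f = 0" using unit_cancel[OF unit_pow[OF nilp_unit'(1)[OF n1]]] by blast
  then show ?thesis unfolding f_def .
qed

lemma uniq_snc:
  fixes a h1 h2 :: "'a::ring_1"
  assumes i1: "idem h1" and i2: "idem h2" and a1: "a * h1 = h1 * a" and a2: "a * h2 = h2 * a"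
    and n1: "nilp (a - h1)" and n2: "nilp (a - h2)"
  shows "h1 = h2"
proof -
  have c: "h2 * h1 = h1 * h2" using peirce_comm[OF i1 a1 n1, of h2] a2 by simp
  have e1: "h1 * h1 = h1" "h2 * h2 = h2" using i1 i2 unfolding idem_def by auto
  have "h1 * (1 - h2) = 0" using uniq_half[OF e1 a1 a2 n1 n2 c] .
  moreover have "h2 * (1 - h1) = 0" using uniq_half[OF e1(2,1) a2 a1 n2 n1 c[symmetric]] .
  ultimately show ?thesis using c by (simp add: algebra_simps)
qed

lemma two_nilp:
  assumes "CSNC TYPE('a::ring_1)"
  shows "nilp (2::'a)"
proof -
  have u1: "unit_el (-1::'a)" unfolding unit_el_def by (rule exI[of _ "-1"]) simp
  have "clean (-1::'a)" unfolding clean_def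
    by (rule exI[of _ 0], rule exI[of _ "-1"]) (simp add: idem_def u1)
  then have "strongly_nil_clean (-1::'a)" using assms unfolding CSNC_def by blast
  then obtain e q :: 'a where ie: "idem e" and nq: "nilp q" and eq: "-1 = e + q"
    unfolding strongly_nil_clean_def by blast
  have ee: "e * e = e" using ie unfolding idem_def .
  have k: "(1 - e) * (1 + e) ^ k = 1 - e" for k
  proof (induct k)
    case (Suc k)
    have "(1 - e) * (1 + e) ^ Suc k = (1 - e) * (1 + e) * (1 + e) ^ k" by (simp add: mult.assoc)
    also have "(1 - e) * (1 + e) = 1 - e" by (simp add: algebra_simps ee)
    finally show ?case using Suc by simp
  qed simp
  have s0: "1 + e + q = 0" by (simp only: add.assoc eq[symmetric]) simp
  have "1 + e = - q" using s0 by (metis add_diff_cancel_right' diff_0)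
  then have "nilp (1 + e)" using nilp_neg[OF nq] by simp
  then obtain n where "(1 + e) ^ n = 0" unfolding nilp_def by blast
  then have "1 - e = 0" using k[of n] by simp
  then have "e = 1" by simp
  then have "q = - 2" using s0 by (metis add_diff_cancel_left' diff_0 one_add_one)
  then show ?thesis using nilp_neg[OF nq] by simp
qed

theorem mainTheorem15:
  assumes "CSNC TYPE('a::ring_1)"
  shows "NCSUC TYPE('a::ring_1)"
  unfolding NCSUC_def
proof (intro allI impI)
  fix a :: 'a
  assume "nil_clean a"
  then obtain e q where ie: "idem e" and nq: "nilp q" and aeq: "a = e + q"
    unfolding nil_clean_def by blast
  have "clean (a - 1)" unfolding clean_def
    by (rule exI[of _ e], rule exI[of _ "q - 1"]) (simp add: ie nilp_unit'(2)[OF nq] aeq algebra_simps)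
  then have "strongly_nil_clean (a - 1)" using assms unfolding CSNC_def by blast
  then obtain f p where i_f: "idem f" and np: "nilp p" and afp: "a - 1 = f + p" and fp: "f * p = p * f"
    unfolding strongly_nil_clean_def by blast
  have ff: "f * f = f" using i_f unfolding idem_def .
  have a_eq: "a = 1 + f + p" using afp by (simp add: algebra_simps)
  have af: "a * f = f * a" unfolding a_eq by (simp add: algebra_simps fp)
  have uf: "unit_el (a - f)" using nilp_unit'(1)[OF np] a_eq by (simp add: algebra_simps)
  have n2: "nilp (2::'a)" using two_nilp[OF assms] .
  have n2f: "nilp (2 * f)" using nilp_mult_comm(1)[of 2 f] n2 by (simp add: mult_2 mult_2_right)
  have "nilp (2 * f + p)"
    by (rule nilp_add[OF _ n2f np]) (simp add: algebra_simps mult_2 mult_2_right fp)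
  then have nf: "nilp (a - (1 - f))" unfolding a_eq by (simp add: algebra_simps mult_2)
  have ww: "(a - f) * (a - (1 - f)) = a * a - a"
    by (simp add: algebra_simps af ff)
  have nw: "nilp (a * a - a)"
    using nilp_mult_comm(2)[OF _ nf, of "a - f"] ww by (simp add: algebra_simps af)
  have i1f: "idem (1 - f)" using ff unfolding idem_def by (simp add: algebra_simps)
  have c1f: "a * (1 - f) = (1 - f) * a" by (simp add: algebra_simps af)
  show "uniquely_strongly_clean a"
    unfolding uniquely_strongly_clean_def
  proof (rule ex1I[of _ f])
    show "idem f \<and> unit_el (a - f) \<and> a * f = f * a" using i_f uf af by blast
  next
    fix g assume "idem g \<and> unit_el (a - g) \<and> a * g = g * a"
    then have ig: "idem g" and ug: "unit_el (a - g)" and ag: "a * g = g * a" by auto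
    have gg: "g * g = g" using ig unfolding idem_def .
    obtain v where v1: "(a - g) * v = 1" and v2: "v * (a - g) = 1" using ug unfolding unit_el_def by blast
    have va: "v * a = a * v"
    proof -
      have "v * a = v * a * ((a - g) * v)" by (simp add: v1)
      also have "\<dots> = v * (a * (a - g)) * v" by (simp only: mult.assoc)
      also have "a * (a - g) = (a - g) * a" by (simp add: right_diff_distrib left_diff_distrib ag)
      also have "v * ((a - g) * a) * v = v * (a - g) * a * v" by (simp only: mult.assoc)
      also have "\<dots> = a * v" by (simp add: v2)
      finally show ?thesis .
    qed
    have wg: "(a - g) * (a - (1 - g)) = a * a - a" by (simp add: algebra_simps ag gg)
    have "a - (1 - g) = v * (a * a - a)"
      by (simp add: wg[symmetric] mult.assoc[symmetric] v2)
    moreover have "nilp (v * (a * a - a))"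
      using nilp_mult_comm(2)[OF _ nw, of v]
      by (simp add: algebra_simps va) (simp add: mult.assoc[symmetric] va, simp add: mult.assoc va)
    ultimately have ng: "nilp (a - (1 - g))" by simp
    have i1g: "idem (1 - g)" using gg unfolding idem_def by (simp add: algebra_simps)
    have c1g: "a * (1 - g) = (1 - g) * a" by (simp add: algebra_simps ag)
    have "1 - g = 1 - f" using uniq_snc[OF i1g i1f c1g c1f ng nf] .
    then show "g = f" by simp
  qed
qed

end
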